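(* Let $\mathcal{S},\mathcal{T}\subset\mathbb{P}$ be nonempty subsets which are each totally ordered with respect to the Loewner order, and suppose $\mathcal{S}$ has a maximum element $M$ and $\mathcal{T}$ has a maximum element $N$. Then $$M\# N=\max\Big\{X\in\mathbb{H}:\ \begin{pmatrix}A & X\\ X & B\end{pmatrix}\geq 0 \text{ for some } A\in\mathcal{S},\ B\in\mathcal{T}\Big\},$$ where the maximum is taken with respect to the Loewner order.
   Context: $\mathbb{H}$ denotes the real vector space of $n\times n$ complex Hermitian matrices and $\mathbb{P}\subset\mathbb{H}$ the open cone of positive definite matrices. The Loewner order: $A\leq B$ iff $B-A$ is positive semidefinite. For $A,B\in\mathbb{P}$ and $t\in[0,1]$, $A\#_t B:=A^{1/2}(A^{-1/2}BA^{-1/2})^tA^{1/2}$ and $A\# B:=A\#_{1/2}B$. *)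

theory Defs
  imports "HOL-Analysis.Analysis"
begin

definition adj :: "complex^'n^'n \<Rightarrow> complex^'n^'n" where
  "adj A = (\<chi> i j. cnj (A $ j $ i))"

definition hermitian :: "complex^'n^'n \<Rightarrow> bool" where
  "hermitian A \<longleftrightarrow> adj A = A"

definition qform :: "complex^'n^'n \<Rightarrow> complex^'n \<Rightarrow> complex" where
  "qform A x = (\<Sum>i\<in>UNIV. cnj (x $ i) * (A *v x) $ i)"

definition psd :: "complex^'n^'n \<Rightarrow> bool" where
  "psd A \<longleftrightarrow> hermitian A \<and> (\<forall>x. 0 \<le> Re (qform A x))"

definition posdef :: "complex^'n^'n \<Rightarrow> bool" where
  "posdef A \<longleftrightarrow> hermitian A \<and> (\<forall>x. x \<noteq> 0 \<longrightarrow> 0 < Re (qform A x))"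

definition loewner_le :: "complex^'n^'n \<Rightarrow> complex^'n^'n \<Rightarrow> bool" where
  "loewner_le A B \<longleftrightarrow> psd (B - A)"

definition msqrt :: "complex^'n^'n \<Rightarrow> complex^'n^'n" where
  "msqrt A = (THE S. psd S \<and> S ** S = A)"

definition gmean :: "complex^'n^'n \<Rightarrow> complex^'n^'n \<Rightarrow> complex^'n^'n" where
  "gmean A B = (let R = msqrt A; Ri = matrix_inv R in R ** msqrt (Ri ** B ** Ri) ** R)"

definition block2 :: "complex^'n^'n \<Rightarrow> complex^'n^'n \<Rightarrow> complex^'n^'n \<Rightarrow> complex^'n^'n
    \<Rightarrow> complex^('n+'n)^('n+'n)" where
  "block2 A X Y B = (\<chi> i j. case (i, j) of
      (Inl a, Inl b) \<Rightarrow> A $ a $ b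
    | (Inl a, Inr b) \<Rightarrow> X $ a $ b
    | (Inr a, Inl b) \<Rightarrow> Y $ a $ b
    | (Inr a, Inr b) \<Rightarrow> B $ a $ b)"

definition loewner_max :: "(complex^'n^'n) set \<Rightarrow> complex^'n^'n \<Rightarrow> bool" where
  "loewner_max S M \<longleftrightarrow> M \<in> S \<and> (\<forall>X\<in>S. loewner_le X M)"

definition loewner_chain :: "(complex^'n^'n) set \<Rightarrow> bool" where
  "loewner_chain S \<longleftrightarrow> (\<forall>A\<in>S. \<forall>B\<in>S. loewner_le A B \<or> loewner_le B A)"

end

theory Submission
  imports Defs
begin


definition cin :: "complex^'n \<Rightarrow> complex^'n \<Rightarrow> complex" where
  "cin x y = (\<Sum>i\<in>UNIV. cnj (x$i) * y$i)"

lemma qform_cin: "qform A x = cin x (A *v x)"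
  by (simp add: qform_def cin_def)

lemma cin_add_right[simp]: "cin x (y + z) = cin x y + cin x z"
  by (simp add: cin_def distrib_left sum.distrib)
lemma cin_add_left[simp]: "cin (x + y) z = cin x z + cin y z"
  by (simp add: cin_def distrib_right sum.distrib)
lemma cin_diff_right[simp]: "cin x (y - z) = cin x y - cin x z"
  by (simp add: cin_def right_diff_distrib sum_subtractf)
lemma cin_diff_left[simp]: "cin (x - y) z = cin x z - cin y z"
  by (simp add: cin_def left_diff_distrib sum_subtractf)
lemma cin_minus_right[simp]: "cin x (- y) = - cin x y"
  by (simp add: cin_def sum_negf)
lemma cin_minus_left[simp]: "cin (- x) y = - cin x y"
  by (simp add: cin_def sum_negf)
lemma cin_zero_right[simp]: "cin x 0 = 0"
  by (simp add: cin_def)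
lemma cin_zero_left[simp]: "cin 0 x = 0"
  by (simp add: cin_def)
lemma cin_smult_right[simp]: "cin x (c *s y) = c * cin x y"
  by (simp add: cin_def sum_distrib_left algebra_simps)
lemma cin_smult_left[simp]: "cin (c *s x) y = cnj c * cin x y"
  by (simp add: cin_def sum_distrib_left algebra_simps)
lemma cin_sum_right: "cin x (\<Sum>v\<in>E. f v) = (\<Sum>v\<in>E. cin x (f v))"
  by (simp add: cin_def sum_component sum_distrib_left) (rule sum.swap)
lemma cin_sum_left: "cin (\<Sum>v\<in>E. f v) x = (\<Sum>v\<in>E. cin (f v) x)"
  by (simp add: cin_def sum_component sum_distrib_right) (rule sum.swap)
lemma cin_commute: "cin y x = cnj (cin x y)"
  by (simp add: cin_def mult.commute)

lemma cnj_mult_self: "cnj z * z = of_real (cmod z ^ 2)"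
  using complex_norm_square[of z] by (simp add: mult.commute)

lemma cin_self: "cin x x = of_real (norm x ^ 2)"
proof -
  have "cin x x = (\<Sum>i\<in>UNIV. of_real (norm (x$i) ^ 2))"
    unfolding cin_def by (rule sum.cong) (auto simp: cnj_mult_self)
  also have "\<dots> = of_real (\<Sum>i\<in>UNIV. norm (x$i) ^ 2)" by simp
  also have "(\<Sum>i\<in>UNIV. norm (x$i) ^ 2) = norm x ^ 2"
    by (simp add: norm_vec_def L2_set_def sum_nonneg)
  finally show ?thesis .
qed

lemma cin_self_Re: "Re (cin x x) = norm x ^ 2" by (simp add: cin_self)
lemma cin_self_Im[simp]: "Im (cin x x) = 0" by (simp add: cin_self)
lemma cin_self_ge0: "0 \<le> Re (cin x x)" by (simp add: cin_self)
lemma cin_self_eq0: "cin x x = 0 \<longleftrightarrow> x = 0" by (simp add: cin_self)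

lemma cin_eqI: assumes "\<And>y. cin y a = cin y b" shows "a = b"
proof -
  have "cin (a - b) (a - b) = cin (a - b) a - cin (a - b) b" by (simp only: cin_diff_right)
  also have "\<dots> = 0" using assms[of "a-b"] by simp
  finally have "cin (a - b) (a - b) = 0" .
  thus ?thesis by (metis cin_self_eq0 eq_iff_diff_eq_0)
qed

lemma mv_add[simp]: "(A::complex^'n^'m) *v (x + y) = A *v x + A *v y"
  by (simp add: matrix_vector_right_distrib)
lemma mv_diff[simp]: "(A::complex^'n^'m) *v (x - y) = A *v x - A *v y"
  by (simp add: vec_eq_iff matrix_vector_mult_def right_diff_distrib sum_subtractf)
lemma mv_minus[simp]: "(A::complex^'n^'m) *v (- y) = - (A *v y)"
  by (simp add: vec_eq_iff matrix_vector_mult_def sum_negf)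
lemma mv_smult[simp]: "(A::complex^'n^'m) *v (c *s y) = c *s (A *v y)"
  by (simp add: vec_eq_iff matrix_vector_mult_def sum_distrib_left algebra_simps)
lemma mv_sum: "(A::complex^'n^'m) *v (\<Sum>v\<in>E. f v) = (\<Sum>v\<in>E. A *v f v)"
  using sum.swap by (auto simp add: vec_eq_iff matrix_vector_mult_def sum_component sum_distrib_left)
lemma add_mv[simp]: "((A::complex^'n^'m) + B) *v x = A *v x + B *v x"
  by (simp add: vec_eq_iff matrix_vector_mult_def distrib_right sum.distrib)
lemma diff_mv[simp]: "((A::complex^'n^'m) - B) *v x = A *v x - B *v x"
  by (simp add: vec_eq_iff matrix_vector_mult_def left_diff_distrib sum_subtractf)
lemma mm_mv[simp]: "((A::complex^'n^'m) ** B) *v x = A *v (B *v x)"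
  by (simp add: matrix_vector_mul_assoc)

lemma cin_adj: "cin x (A *v y) = cin (adj A *v x) y"
  unfolding cin_def adj_def matrix_vector_mult_def
  by (simp add: sum_distrib_left sum_distrib_right algebra_simps) (rule sum.swap)

lemma herm_cin: "hermitian A \<Longrightarrow> cin x (A *v y) = cin (A *v x) y"
  by (simp add: hermitian_def cin_adj)

lemma herm_iff: "hermitian A \<longleftrightarrow> (\<forall>x y. cin x (A *v y) = cin (A *v x) y)"
proof
  assume "\<forall>x y. cin x (A *v y) = cin (A *v x) y"
  hence "\<forall>x y. cin (adj A *v x) y = cin (A *v x) y" by (simp add: cin_adj)
  hence e: "\<And>x y. cin (adj A *v x) y = cin (A *v x) y" by blast
  have "adj A *v x = A *v x" for x
  proof (rule cin_eqI)
    fix y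
    have "cin y (adj A *v x) = cnj (cin (adj A *v x) y)" by (rule cin_commute)
    also have "\<dots> = cnj (cin (A *v x) y)" by (simp only: e)
    also have "\<dots> = cin y (A *v x)" by (rule cin_commute[symmetric])
    finally show "cin y (adj A *v x) = cin y (A *v x)" .
  qed
  hence "\<forall>x. adj A *v x = A *v x" by blast
  thus "hermitian A" by (simp add: hermitian_def matrix_eq)
qed (simp add: herm_cin)

lemma herm_qform_real: assumes h: "hermitian A" shows "Im (qform A x) = 0"
proof -
  have "qform A x = cin (A *v x) x" using herm_cin[OF h] by (simp add: qform_cin)
  also have "\<dots> = cnj (cin x (A *v x))" by (rule cin_commute)
  finally have e: "qform A x = cnj (qform A x)" by (simp only: qform_cin)
  have "Im (qform A x) = Im (cnj (qform A x))" using e by (rule arg_cong)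
  hence "Im (qform A x) = - Im (qform A x)" by (simp only: cnj.sel)
  thus ?thesis by linarith
qed

lemma herm_add: assumes "hermitian A" "hermitian B" shows "hermitian (A + B)"
  unfolding herm_iff by (simp add: herm_cin[OF assms(1)] herm_cin[OF assms(2)])
lemma herm_diff: assumes "hermitian A" "hermitian B" shows "hermitian (A - B)"
  unfolding herm_iff by (simp add: herm_cin[OF assms(1)] herm_cin[OF assms(2)])
lemma herm_mult3: assumes "hermitian R" "hermitian G" shows "hermitian (R ** G ** R)"
  unfolding herm_iff by (simp add: herm_cin[OF assms(1)] herm_cin[OF assms(2)])
lemma herm_one: "hermitian (mat 1 :: complex^'n^'n)"
  unfolding herm_iff by simp

lemma psd_add: "psd A \<Longrightarrow> psd B \<Longrightarrow> psd (A + B)"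
  by (simp add: psd_def herm_add qform_cin)

lemma loewner_trans: "loewner_le A B \<Longrightarrow> loewner_le B C \<Longrightarrow> loewner_le A C"
  unfolding loewner_le_def using psd_add[of "C - B" "B - A"] by simp

lemma posdef_psd: assumes a: "posdef A" shows "psd A"
  unfolding psd_def
proof (intro conjI allI)
  show "hermitian A" using a unfolding posdef_def by blast
  fix x show "0 \<le> Re (qform A x)"
  proof (cases "x = 0")
    case True thus ?thesis by (simp add: qform_cin)
  next
    case False thus ?thesis using a unfolding posdef_def by (simp add: less_imp_le)
  qed
qed

lemma qform_cong3: "hermitian R \<Longrightarrow> qform (R ** G ** R) x = qform G (R *v x)"
  by (simp add: qform_cin herm_cin[of R])

lemma psd_cong3: "hermitian R \<Longrightarrow> psd G \<Longrightarrow> psd (R ** G ** R)"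
  unfolding psd_def by (simp add: herm_mult3 qform_cong3)



definition onb_eig :: "complex^'n^'n \<Rightarrow> (complex^'n) set \<Rightarrow> (complex^'n \<Rightarrow> real) \<Rightarrow> bool" where
  "onb_eig H E lam \<longleftrightarrow> finite E \<and> (\<forall>v\<in>E. \<forall>w\<in>E. cin v w = (if v = w then 1 else 0))
     \<and> (\<forall>v\<in>E. H *v v = complex_of_real (lam v) *s v)"

lemma inner_cin: "inner x y = Re (cin x y)"
  by (simp add: inner_vec_def cin_def inner_complex_def)

lemma scaleR_vs: "r *\<^sub>R (x::complex^'n) = complex_of_real r *s x"
  by (simp only: vec_eq_iff scaleR_vec_def vector_scalar_mult_def vec_lambda_beta scaleR_conv_of_real) simp

lemma onbD:
  assumes "onb_eig H E lam"
  shows onb_fin: "finite E"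
    and onb_orth: "\<And>v w. v \<in> E \<Longrightarrow> w \<in> E \<Longrightarrow> cin v w = (if v = w then 1 else 0)"
    and onb_ev: "\<And>v. v \<in> E \<Longrightarrow> H *v v = complex_of_real (lam v) *s v"
  using assms unfolding onb_eig_def by blast+

lemma onb_card: fixes E :: "(complex^'n) set" assumes on: "onb_eig H E lam" shows "card E \<le> DIM(complex^'n)"
proof -
  have po: "pairwise orthogonal E"
    unfolding pairwise_def orthogonal_def inner_cin
  proof (intro ballI impI)
    fix x y assume "x \<in> E" "y \<in> E" "x \<noteq> y"
    hence "cin x y = 0" using onb_orth[OF on, of x y] by simp
    thus "Re (cin x y) = 0" by simp
  qed
  have "0 \<notin> E"
  proof
    assume "0 \<in> E"
    hence "cin 0 0 = (1::complex)" using onb_orth[OF on, of 0 0] by simp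
    thus False by simp
  qed
  then show ?thesis using independent_bound[OF pairwise_orthogonal_independent[OF po]] by blast
qed

lemma cont_nth: "continuous_on UNIV (\<lambda>y::complex^'n. y $ i)"
  by (simp add: linear_continuous_on bounded_linear_vec_nth)
lemma cont_cin: "continuous_on UNIV (\<lambda>y. cin u y)"
  unfolding cin_def by (intro continuous_on_sum ballI continuous_on_mult continuous_on_const cont_nth)
lemma cont_qform: "continuous_on UNIV (\<lambda>y. Re (qform H y))"
proof -
  have "(\<lambda>y. Re (qform H y)) = (\<lambda>y. Re (\<Sum>i\<in>UNIV. cnj (y$i) * (\<Sum>j\<in>UNIV. H$i$j * y$j)))"
    by (simp add: qform_def matrix_vector_mult_def)
  thus ?thesis
    by (simp only:) (intro continuous_on_Re continuous_on_sum ballI continuous_on_mult continuous_on_const cont_nth continuous_on_cnj)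
qed

lemma quad_zero: fixes a b :: real assumes "\<forall>t. 0 \<le> 2*t*a + t^2*b" shows "a = 0"
proof (rule ccontr)
  assume a: "a \<noteq> 0"
  define c where "c = \<bar>b\<bar> + 1"
  define k where "k = \<bar>b\<bar> / c"
  define t where "t = - a / c"
  have c: "c > 0" unfolding c_def by simp
  have k: "k < 1" unfolding k_def c_def by simp
  have tb: "t * \<bar>b\<bar> = - a * k" unfolding t_def k_def by simp
  have "a * a > 0" using a by (auto simp: zero_less_mult_iff)
  hence "(a * a) / c > 0" using c by simp
  moreover have "t * a = - ((a * a) / c)" unfolding t_def by simp
  ultimately have ta: "t * a < 0" by simp
  have "2*t*a + t^2*b \<le> 2*t*a + t^2*\<bar>b\<bar>"
    by (intro add_left_mono mult_left_mono) auto
  also have "\<dots> = t * (2*a + t*\<bar>b\<bar>)" by (simp add: algebra_simps power2_eq_square)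
  also have "\<dots> = (t*a) * (2 - k)" unfolding tb by (simp add: algebra_simps)
  also have "\<dots> < 0" by (rule mult_neg_pos) (use ta k in auto)
  finally show False using assms by (metis not_le)
qed

lemma qform_scaleR: "qform H (r *\<^sub>R y) = of_real (r^2) * qform H y"
  by (simp add: qform_cin scaleR_vs power2_eq_square)

lemma extend:
  fixes H :: "complex^'n^'n"
  assumes h: "hermitian H" and on: "onb_eig H E lam" and w: "w \<noteq> 0" "\<forall>u\<in>E. cin u w = 0"
  shows "\<exists>x0 l. x0 \<notin> E \<and> onb_eig H (insert x0 E) (lam(x0 := l))"
proof -
  define W where "W = {y. \<forall>u\<in>E. cin u y = 0}"
  define K where "K = W \<inter> sphere 0 1"
  define f where "f = (\<lambda>y. Re (qform H y))"
  have WI: "W = (\<Inter>u\<in>E. {y. cin u y = 0})" unfolding W_def by auto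
  have "closed W" unfolding WI
    by (intro closed_INT ballI closed_Collect_eq continuous_on_const cont_cin)
  hence "compact K" unfolding K_def by (intro closed_Int_compact compact_sphere)
  have Wadd: "y + z \<in> W" if "y \<in> W" "z \<in> W" for y z using that unfolding W_def by auto
  have Wsm: "c *s y \<in> W" if "y \<in> W" for y c using that unfolding W_def by auto
  have "norm ((1 / norm w) *\<^sub>R w) = 1" using w by simp
  moreover have "(1 / norm w) *\<^sub>R w \<in> W" unfolding scaleR_vs by (rule Wsm) (use w in \<open>simp add: W_def\<close>)
  ultimately have "(1 / norm w) *\<^sub>R w \<in> K" unfolding K_def by simp
  hence "K \<noteq> {}" by auto
  have "continuous_on K f" unfolding f_def using cont_qform continuous_on_subset by blast
  then obtain x0 where x0K: "x0 \<in> K" and x0min: "\<forall>y\<in>K. f x0 \<le> f y"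
    using continuous_attains_inf[OF \<open>compact K\<close> \<open>K \<noteq> {}\<close>] by blast
  define l where "l = f x0"
  have x0W: "x0 \<in> W" and nx0: "norm x0 = 1" using x0K unfolding K_def by auto
  have cx0: "cin x0 x0 = 1" using nx0 by (simp add: cin_self)
  have lower: "l * Re (cin y y) \<le> f y" if "y \<in> W" for y
  proof (cases "y = 0")
    case True then show ?thesis by (simp add: f_def qform_cin)
  next
    case False
    define r where "r = 1 / norm y"
    have "norm (r *\<^sub>R y) = 1" using False by (simp add: r_def)
    moreover have "r *\<^sub>R y \<in> W" unfolding scaleR_vs by (rule Wsm[OF that])
    ultimately have "r *\<^sub>R y \<in> K" unfolding K_def by simp
    hence "l \<le> f (r *\<^sub>R y)" using x0min l_def by auto
    also have "f (r *\<^sub>R y) = r^2 * f y" by (simp add: f_def qform_scaleR)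
    finally have "l \<le> f y / norm y ^ 2" using False by (simp add: r_def power_divide)
    thus ?thesis using False by (simp add: cin_self_Re pos_le_divide_eq)
  qed
  define g where "g = H *v x0 - complex_of_real l *s x0"
  define Q where "Q = (\<lambda>y. f y - l * Re (cin y y))"
  have Qnn: "0 \<le> Q y" if "y \<in> W" for y using lower[OF that] by (simp add: Q_def)
  have Q0: "Q x0 = 0" by (simp add: Q_def l_def cx0)
  have Qexp: "Q (x0 + complex_of_real t *s y) = 2 * t * Re (cin y g) + t^2 * Q y" for t y
  proof -
    define z where "z = x0 + complex_of_real t *s y"
    have e1: "Re (cin x0 (H *v y)) = Re (cin y (H *v x0))"
      using herm_cin[OF h, of x0 y] cin_commute by (metis cnj.sel(1))
    have e2: "Re (cin x0 y) = Re (cin y x0)" using cin_commute by (metis cnj.sel(1))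
    have A0: "cin z (H *v z) = cin x0 (H *v x0) + of_real t * cin x0 (H *v y) + of_real t * cin y (H *v x0)
        + of_real t * of_real t * cin y (H *v y)"
      by (simp add: z_def algebra_simps)
    have A: "Re (cin z (H *v z)) = Re (cin x0 (H *v x0)) + 2*t*Re (cin y (H *v x0)) + t^2 * Re (cin y (H *v y))"
      unfolding A0 using e1 by (simp add: power2_eq_square)
    have B0: "cin z z = cin x0 x0 + of_real t * cin x0 y + of_real t * cin y x0
        + of_real t * of_real t * cin y y"
      by (simp add: z_def algebra_simps)
    have B: "Re (cin z z) = 1 + 2*t*Re (cin y x0) + t^2 * Re (cin y y)"
      unfolding B0 using e2 cx0 by (simp add: power2_eq_square)
    have lx: "Re (cin x0 (H *v x0)) = l" by (simp add: l_def f_def qform_cin)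
    have "Q z = 2 * t * Re (cin y g) + t^2 * Q y"
      unfolding Q_def f_def qform_cin A B lx g_def by (simp add: algebra_simps)
    thus ?thesis by (simp add: z_def)
  qed
  have cg0: "cin y g = 0" if "y \<in> W" for y
  proof -
    have "Re (cin z g) = 0" if "z \<in> W" for z
    proof (rule quad_zero, rule allI)
      fix t
      have "x0 + complex_of_real t *s z \<in> W" using Wadd Wsm x0W that by blast
      thus "0 \<le> 2 * t * Re (cin z g) + t^2 * Q z" using Qnn Qexp by metis
    qed
    from this[OF that] this[OF Wsm[OF that, of \<i>]] show ?thesis
      by (simp add: complex_eq_iff)
  qed
  have gW: "g \<in> W" unfolding W_def mem_Collect_eq
  proof
    fix u assume u: "u \<in> E"
    have c0: "cin u x0 = 0" using x0W u unfolding W_def by simp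
    have "cin u (H *v x0) = cin (H *v u) x0" by (rule herm_cin[OF h])
    also have "\<dots> = cnj (of_real (lam u)) * cin u x0" using onb_ev[OF on u] by simp
    finally have c1: "cin u (H *v x0) = 0" using c0 by simp
    show "cin u g = 0" using c0 c1 by (simp add: g_def)
  qed
  have "g = 0" using cg0[OF gW] cin_self_eq0 by blast
  hence ev: "H *v x0 = complex_of_real l *s x0" by (simp add: g_def)
  have nE: "x0 \<notin> E" using x0W cx0 unfolding W_def by auto
  have "onb_eig H (insert x0 E) (lam(x0 := l))"
    unfolding onb_eig_def
  proof (intro conjI ballI)
    have "finite E" using on unfolding onb_eig_def by blast
    thus "finite (insert x0 E)" by simp
  next
    fix v w assume v: "v \<in> insert x0 E" and w: "w \<in> insert x0 E"
    have x0W': "\<forall>u\<in>E. cin u x0 = 0" using x0W unfolding W_def by simp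
    have a: "cin u x0 = 0" if "u \<in> E" for u using x0W' that by blast
    have b: "cin x0 u = 0" if "u \<in> E" for u using a[OF that] cin_commute by (metis complex_cnj_zero)
    show "cin v w = (if v = w then 1 else 0)"
      using v w a b cx0 nE on unfolding onb_eig_def by auto
  next
    fix v assume v: "v \<in> insert x0 E"
    show "H *v v = complex_of_real ((lam(x0 := l)) v) *s v"
      using v ev on nE unfolding onb_eig_def by auto
  qed
  thus ?thesis using nE by blast
qed

lemma sum_delta_cin:
  assumes "onb_eig H E lam" "u \<in> E"
  shows "(\<Sum>v\<in>E. c v * cin u v) = c u"
proof -
  have "(\<Sum>v\<in>E. c v * cin u v) = (\<Sum>v\<in>E. if u = v then c v else 0)"
    using assms unfolding onb_eig_def by (intro sum.cong) auto
  also have "\<dots> = c u" using assms unfolding onb_eig_def by simp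
  finally show ?thesis .
qed

theorem spectral:
  fixes H :: "complex^'n^'n"
  assumes h: "hermitian H"
  shows "\<exists>E lam. onb_eig H E lam \<and> (\<forall>x. x = (\<Sum>v\<in>E. cin v x *s v))"
proof -
  define P where "P = (\<lambda>k. \<exists>E lam. onb_eig H E lam \<and> card E = k)"
  have P0: "P 0" unfolding P_def onb_eig_def by (rule exI[of _ "{}"]) auto
  have bnd: "\<forall>k. P k \<longrightarrow> k \<le> DIM(complex^'n)"
  proof (intro allI impI)
    fix k assume "P k"
    then obtain E lam where "onb_eig H E lam" "card E = k" unfolding P_def by blast
    thus "k \<le> DIM(complex^'n)" using onb_card[of H E lam] by simp
  qed
  obtain k where "P k" and kmax: "\<forall>j. P j \<longrightarrow> j \<le> k"
    using Nat.ex_has_greatest_nat[OF P0 bnd] by blast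
  then obtain E lam where on: "onb_eig H E lam" and ck: "card E = k" unfolding P_def by blast
  have "x = (\<Sum>v\<in>E. cin v x *s v)" for x
  proof (rule ccontr)
    assume ne: "x \<noteq> (\<Sum>v\<in>E. cin v x *s v)"
    define w where "w = x - (\<Sum>v\<in>E. cin v x *s v)"
    have "w \<noteq> 0" using ne unfolding w_def by simp
    moreover have "\<forall>u\<in>E. cin u w = 0"
    proof
      fix u assume u: "u \<in> E"
      have "cin u w = cin u x - (\<Sum>v\<in>E. cin v x * cin u v)"
        by (simp add: w_def cin_sum_right)
      also have "(\<Sum>v\<in>E. cin v x * cin u v) = cin u x" by (rule sum_delta_cin[OF on u])
      finally show "cin u w = 0" by simp
    qed
    ultimately obtain x0 l where "x0 \<notin> E" "onb_eig H (insert x0 E) (lam(x0 := l))"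
      using extend[OF h on] by blast
    moreover have "finite E" by (rule onb_fin[OF on])
    ultimately have "P (Suc k)" unfolding P_def using ck by (intro exI[of _ "insert x0 E"]) auto
    thus False using kmax by fastforce
  qed
  thus ?thesis using on by blast
qed



definition fm :: "(complex^'n) set \<Rightarrow> (complex^'n \<Rightarrow> real) \<Rightarrow> (real \<Rightarrow> real) \<Rightarrow> complex^'n^'n" where
  "fm E lam f = (\<chi> i j. \<Sum>v\<in>E. complex_of_real (f (lam v)) * v$i * cnj (v$j))"

definition cmpl :: "(complex^'n) set \<Rightarrow> bool" where
  "cmpl E \<longleftrightarrow> (\<forall>x. x = (\<Sum>v\<in>E. cin v x *s v))"

lemma spectral':
  fixes H :: "complex^'n^'n"
  assumes "hermitian H" shows "\<exists>E lam. onb_eig H E lam \<and> cmpl E"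
  using spectral[OF assms] unfolding cmpl_def by blast

lemma fm_mv: "fm E lam f *v x = (\<Sum>v\<in>E. (complex_of_real (f (lam v)) * cin v x) *s v)"
proof -
  have "(fm E lam f *v x) $ i = (\<Sum>v\<in>E. (complex_of_real (f (lam v)) * cin v x) *s v) $ i" for i
  proof -
    have "(fm E lam f *v x) $ i = (\<Sum>j\<in>UNIV. \<Sum>v\<in>E. complex_of_real (f (lam v)) * v$i * cnj (v$j) * x$j)"
      by (simp add: fm_def matrix_vector_mult_def sum_distrib_right)
    also have "\<dots> = (\<Sum>v\<in>E. \<Sum>j\<in>UNIV. complex_of_real (f (lam v)) * v$i * cnj (v$j) * x$j)"
      by (rule sum.swap)
    also have "\<dots> = (\<Sum>v\<in>E. (complex_of_real (f (lam v)) * cin v x) * v $ i)"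
      by (simp add: cin_def sum_distrib_left sum_distrib_right mult_ac)
    finally show ?thesis by (simp add: sum_component)
  qed
  thus ?thesis by (simp add: vec_eq_iff)
qed

lemma cin_delta: "onb_eig H E lam \<Longrightarrow> w \<in> E \<Longrightarrow> cin w (\<Sum>v\<in>E. c v *s v) = c w"
  by (simp add: cin_sum_right sum_delta_cin)

lemma cin_fm: "onb_eig H E lam \<Longrightarrow> w \<in> E \<Longrightarrow> cin w (fm E lam f *v x) = complex_of_real (f (lam w)) * cin w x"
  unfolding fm_mv by (rule cin_delta)

lemma cmpl_eq: assumes "cmpl E" "\<And>w. w \<in> E \<Longrightarrow> cin w a = cin w b" shows "a = b"
proof -
  have "a = (\<Sum>v\<in>E. cin v a *s v)" using assms(1) unfolding cmpl_def by blast
  also have "\<dots> = (\<Sum>v\<in>E. cin v b *s v)" using assms(2) by (intro sum.cong) auto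
  also have "\<dots> = b" using assms(1) unfolding cmpl_def by metis
  finally show ?thesis .
qed

lemma H_mv: assumes on: "onb_eig H E lam" and c: "cmpl E"
  shows "H *v x = (\<Sum>v\<in>E. (complex_of_real (lam v) * cin v x) *s v)"
proof -
  have "H *v x = H *v (\<Sum>v\<in>E. cin v x *s v)" using c unfolding cmpl_def by metis
  also have "\<dots> = (\<Sum>v\<in>E. cin v x *s (H *v v))" by (simp add: mv_sum)
  also have "\<dots> = (\<Sum>v\<in>E. (complex_of_real (lam v) * cin v x) *s v)"
    by (intro sum.cong refl) (simp add: onb_ev[OF on] vector_smult_assoc mult.commute)
  finally show ?thesis .
qed

lemma fm_id: assumes on: "onb_eig H E lam" and c: "cmpl E" shows "fm E lam (\<lambda>t. t) = H"
  unfolding matrix_eq fm_mv H_mv[OF on c] by simp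

lemma fm_cong: "(\<And>v. v \<in> E \<Longrightarrow> f (lam v) = g (lam v)) \<Longrightarrow> fm E lam f = fm E lam g"
  unfolding fm_def by (simp add: vec_eq_iff)

lemma fm_one: assumes "cmpl E" "\<And>v. v \<in> E \<Longrightarrow> f (lam v) = 1" shows "fm E lam f = mat 1"
  unfolding matrix_eq fm_mv
proof
  fix x
  have "(\<Sum>v\<in>E. (complex_of_real (f (lam v)) * cin v x) *s v) = (\<Sum>v\<in>E. cin v x *s v)"
    using assms(2) by (intro sum.cong) auto
  also have "\<dots> = x" using assms(1) unfolding cmpl_def by metis
  finally show "(\<Sum>v\<in>E. (complex_of_real (f (lam v)) * cin v x) *s v) = mat 1 *v x" by simp
qed

lemma fm_zero: "fm E lam (\<lambda>t. 0) = 0"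
  unfolding fm_def by (simp add: vec_eq_iff)

lemma fm_mult: assumes on: "onb_eig H E lam" and c: "cmpl E"
  shows "fm E lam f ** fm E lam g = fm E lam (\<lambda>t. f t * g t)"
  unfolding matrix_eq
proof
  fix x
  have "fm E lam f ** fm E lam g *v x = fm E lam f *v (fm E lam g *v x)" by simp
  also have "\<dots> = (\<Sum>v\<in>E. (complex_of_real (f (lam v)) * cin v (fm E lam g *v x)) *s v)"
    by (rule fm_mv)
  also have "\<dots> = (\<Sum>v\<in>E. (complex_of_real (f (lam v) * g (lam v)) * cin v x) *s v)"
    by (intro sum.cong refl) (simp add: cin_fm[OF on])
  also have "\<dots> = fm E lam (\<lambda>t. f t * g t) *v x" by (simp add: fm_mv)
  finally show "fm E lam f ** fm E lam g *v x = fm E lam (\<lambda>t. f t * g t) *v x" .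
qed

lemma herm_fm: "hermitian (fm E lam f)"
  unfolding hermitian_def adj_def fm_def by (simp add: vec_eq_iff mult_ac)

lemma qform_fm: "Re (qform (fm E lam f) x) = (\<Sum>v\<in>E. f (lam v) * (cmod (cin v x))^2)"
proof -
  have "qform (fm E lam f) x = (\<Sum>v\<in>E. (complex_of_real (f (lam v)) * cin v x) * cin x v)"
    by (simp add: qform_cin fm_mv cin_sum_right)
  also have "\<dots> = (\<Sum>v\<in>E. complex_of_real (f (lam v) * (cmod (cin v x))^2))"
  proof (intro sum.cong refl)
    fix v
    have "cin x v = cnj (cin v x)" by (rule cin_commute)
    hence e: "cin v x * cin x v = complex_of_real ((cmod (cin v x))\<^sup>2)"
      using cnj_mult_self[of "cin v x"] by (simp only: mult.commute)
    show "complex_of_real (f (lam v)) * cin v x * cin x v = complex_of_real (f (lam v) * (cmod (cin v x))\<^sup>2)"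
      by (simp only: mult.assoc e of_real_mult)
  qed
  finally show ?thesis by simp
qed

lemma psd_fm: "(\<And>v. v \<in> E \<Longrightarrow> 0 \<le> f (lam v)) \<Longrightarrow> psd (fm E lam f)"
  unfolding psd_def qform_fm by (auto intro: sum_nonneg simp: herm_fm)

lemma psd_herm: "psd A \<Longrightarrow> hermitian A" by (simp add: psd_def)

lemma lam_qform: assumes on: "onb_eig H E lam" and v: "v \<in> E" shows "Re (qform H v) = lam v"
proof -
  have "qform H v = complex_of_real (lam v) * cin v v" by (simp add: qform_cin onb_ev[OF on v])
  also have "cin v v = 1" using onb_orth[OF on v v] by simp
  finally show ?thesis by simp
qed

lemma sqrt_exists: fixes H :: "complex^'n^'n" assumes p: "psd H" shows "\<exists>S. psd S \<and> S ** S = H"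
proof -
  obtain E lam where on: "onb_eig H E lam" and c: "cmpl E"
    using spectral'[OF psd_herm[OF p]] by blast
  have nn: "0 \<le> lam v" if "v \<in> E" for v using lam_qform[OF on that] p unfolding psd_def by metis
  have "fm E lam sqrt ** fm E lam sqrt = fm E lam (\<lambda>t. sqrt t * sqrt t)" by (rule fm_mult[OF on c])
  also have "\<dots> = fm E lam (\<lambda>t. t)" by (rule fm_cong) (simp add: nn)
  also have "\<dots> = H" by (rule fm_id[OF on c])
  finally show ?thesis using psd_fm[where f=sqrt and E=E and lam=lam] nn by auto
qed

lemma neg_eig: fixes H :: "complex^'n^'n" assumes h: "hermitian H" and np: "\<not> psd H"
  shows "\<exists>v l. v \<noteq> 0 \<and> l < 0 \<and> H *v v = complex_of_real l *s v"
proof -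
  obtain E lam where on: "onb_eig H E lam" and c: "cmpl E"
    using spectral'[OF h] by blast
  have "\<exists>v\<in>E. lam v < 0"
  proof (rule ccontr)
    assume "\<not> (\<exists>v\<in>E. lam v < 0)"
    hence "psd (fm E lam (\<lambda>t. t))" by (intro psd_fm) auto
    thus False using np fm_id[OF on c] by simp
  qed
  then obtain v where v: "v \<in> E" "lam v < 0" by blast
  have "v \<noteq> 0" using onb_orth[OF on v(1) v(1)] by auto
  thus ?thesis using v onb_ev[OF on v(1)] by blast
qed

lemma nz_eig: fixes H :: "complex^'n^'n" assumes h: "hermitian H" and nz: "H \<noteq> 0"
  shows "\<exists>v l. v \<noteq> 0 \<and> l \<noteq> 0 \<and> H *v v = complex_of_real l *s v"
proof -
  obtain E lam where on: "onb_eig H E lam" and c: "cmpl E"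
    using spectral'[OF h] by blast
  have "\<exists>v\<in>E. lam v \<noteq> 0"
  proof (rule ccontr)
    assume "\<not> (\<exists>v\<in>E. lam v \<noteq> 0)"
    hence "fm E lam (\<lambda>t. t) = fm E lam (\<lambda>t. 0)" by (intro fm_cong) auto
    thus False using nz fm_id[OF on c] fm_zero by metis
  qed
  then obtain v where v: "v \<in> E" "lam v \<noteq> 0" by blast
  have "v \<noteq> 0" using onb_orth[OF on v(1) v(1)] by auto
  thus ?thesis using v onb_ev[OF on v(1)] by blast
qed

lemma norm_shift: "Re (cin (a + complex_of_real m *s b) (a + complex_of_real m *s b))
   = Re (cin a a) + 2 * m * Re (cin b a) + m^2 * Re (cin b b)"
proof -
  have e: "Re (cin a b) = Re (cin b a)" using cin_commute by (metis cnj.sel(1))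
  show ?thesis by (simp add: e algebra_simps power2_eq_square)
qed

lemma psd_qform: "psd A \<Longrightarrow> 0 \<le> Re (qform A x)" by (simp add: psd_def)

lemma sqrt_unique:
  fixes S T :: "complex^'n^'n"
  assumes S: "psd S" and T: "psd T" and e: "S ** S = T ** T"
  shows "S = T"
proof (rule ccontr)
  assume "S \<noteq> T"
  hence "S - T \<noteq> 0" by simp
  then obtain v m where v: "v \<noteq> 0" and m: "m \<noteq> 0" and ev: "(S - T) *v v = complex_of_real m *s v"
    using nz_eig[OF herm_diff[OF psd_herm[OF S] psd_herm[OF T]]] by blast
  have Sv: "S *v v = T *v v + complex_of_real m *s v" using ev by (simp add: algebra_simps)
  have Tv: "T *v v = S *v v + complex_of_real (- m) *s v" using ev by (simp add: algebra_simps)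
  have eq: "cin (S *v v) (S *v v) = cin (T *v v) (T *v v)"
  proof -
    have "cin (S *v v) (S *v v) = cin v ((S ** S) *v v)" using herm_cin[OF psd_herm[OF S]] by simp
    also have "\<dots> = cin v ((T ** T) *v v)" by (simp add: e)
    also have "\<dots> = cin (T *v v) (T *v v)" using herm_cin[OF psd_herm[OF T]] by simp
    finally show ?thesis .
  qed
  define n where "n = Re (cin v v)"
  have n: "n > 0" using v unfolding n_def by (simp add: cin_self)
  define qS where "qS = Re (cin v (S *v v))"
  define qT where "qT = Re (cin v (T *v v))"
  have qS: "qS \<ge> 0" using psd_qform[OF S] unfolding qS_def qform_cin .
  have qT: "qT \<ge> 0" using psd_qform[OF T] unfolding qT_def qform_cin .
  have "Re (cin (S *v v) (S *v v)) = Re (cin (T *v v) (T *v v)) + 2 * m * qT + m^2 * n"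
    unfolding Sv norm_shift qT_def n_def ..
  hence 1: "2 * m * qT + m^2 * n = 0" using eq by simp
  have "Re (cin (T *v v) (T *v v)) = Re (cin (S *v v) (S *v v)) + 2 * (-m) * qS + (-m)^2 * n"
    unfolding Tv norm_shift qS_def n_def ..
  hence 2: "- 2 * m * qS + m^2 * n = 0" using eq by simp
  have "m * (2 * qT + m * n) = 0" using 1 by (simp add: power2_eq_square algebra_simps)
  hence a: "2 * qT + m * n = 0" using m by simp
  have "m * (- 2 * qS + m * n) = 0" using 2 by (simp add: power2_eq_square algebra_simps)
  hence b: "- 2 * qS + m * n = 0" using m by simp
  have "m * n = 0" using a b qS qT by linarith
  thus False using m n by simp
qed


lemma msqrt: fixes A :: "complex^'n^'n" assumes "psd A"
  shows "psd (msqrt A)" "msqrt A ** msqrt A = A"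
proof -
  have "\<exists>!S. psd S \<and> S ** S = A"
    using sqrt_exists[OF assms] sqrt_unique by metis
  from theI'[OF this] show "psd (msqrt A)" "msqrt A ** msqrt A = A"
    unfolding msqrt_def by auto
qed

lemma sq_le_mono:
  fixes C P :: "complex^'n^'n"
  assumes C: "hermitian C" and P: "psd P" and le: "psd (P ** P - C ** C)"
  shows "psd (P - C)"
proof (rule ccontr)
  assume np: "\<not> psd (P - C)"
  obtain v m where v: "v \<noteq> 0" and m: "m < 0" and ev: "(P - C) *v v = complex_of_real m *s v"
    using neg_eig[OF herm_diff[OF psd_herm[OF P] C] np] by blast
  have Cv: "C *v v = P *v v + complex_of_real (- m) *s v" using ev by (simp add: algebra_simps)
  define n where "n = Re (cin v v)"
  have n: "n > 0" using v unfolding n_def by (simp add: cin_self)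
  define qP where "qP = Re (cin v (P *v v))"
  have qP: "qP \<ge> 0" using psd_qform[OF P] unfolding qP_def qform_cin .
  have "qform (P ** P - C ** C) v = cin (P *v v) (P *v v) - cin (C *v v) (C *v v)"
    using herm_cin[OF psd_herm[OF P]] herm_cin[OF C] by (simp add: qform_cin)
  hence "Re (qform (P ** P - C ** C) v) = Re (cin (P *v v) (P *v v)) - Re (cin (C *v v) (C *v v))"
    by simp
  also have "Re (cin (C *v v) (C *v v)) = Re (cin (P *v v) (P *v v)) + 2 * (-m) * qP + (-m)^2 * n"
    unfolding Cv norm_shift qP_def n_def ..
  finally have "Re (qform (P ** P - C ** C) v) = 2 * m * qP - m^2 * n" by simp
  also have "\<dots> < 0"
  proof -
    have "2 * m * qP \<le> 0" using m qP by (simp add: mult_nonpos_nonneg)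
    moreover have "m^2 * n > 0" using m n by simp
    ultimately show ?thesis by linarith
  qed
  finally show False using psd_qform[OF le, of v] by linarith
qed



lemma sqrt_inv:
  fixes A :: "complex^'n^'n"
  assumes pd: "posdef A"
  shows "msqrt A ** matrix_inv (msqrt A) = mat 1" "matrix_inv (msqrt A) ** msqrt A = mat 1"
    "hermitian (matrix_inv (msqrt A))" "hermitian (msqrt A)" "msqrt A ** msqrt A = A" "psd (msqrt A)"
proof -
  define R where "R = msqrt A"
  have pA: "psd A" using posdef_psd[OF pd] .
  have pR: "psd R" and RR: "R ** R = A" using msqrt[OF pA] unfolding R_def by auto
  have hR: "hermitian R" using psd_herm[OF pR] .
  have "inj ((*v) R)"
  proof (rule injI)
    fix x y assume e: "R *v x = R *v y"
    have "A *v (x - y) = R *v (R *v x - R *v y)" unfolding RR[symmetric] by simp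
    also have "\<dots> = 0" using e by simp
    finally have "qform A (x - y) = 0" by (simp add: qform_cin)
    hence "x - y = 0" using pd unfolding posdef_def by (metis less_irrefl zero_complex.sel(1))
    thus "x = y" by simp
  qed
  then obtain L where "L ** R = mat 1" using matrix_left_invertible_injective by blast
  hence "invertible R" using invertible_left_inverse by blast
  hence inv: "R ** matrix_inv R = mat 1 \<and> matrix_inv R ** R = mat 1"
    unfolding invertible_def matrix_inv_def by (rule someI_ex)
  show "msqrt A ** matrix_inv (msqrt A) = mat 1" "matrix_inv (msqrt A) ** msqrt A = mat 1"
    using inv unfolding R_def by auto
  define Ri where "Ri = matrix_inv R"
  have RRi: "R *v (Ri *v x) = x" for x using inv unfolding Ri_def
    by (metis matrix_vector_mul_assoc matrix_vector_mul_lid)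
  have "cin x (Ri *v y) = cin (Ri *v x) y" for x y
  proof -
    have "cin x (Ri *v y) = cin (R *v (Ri *v x)) (Ri *v y)" by (simp add: RRi)
    also have "\<dots> = cin (Ri *v x) (R *v (Ri *v y))" by (rule herm_cin[OF hR, symmetric])
    also have "\<dots> = cin (Ri *v x) y" by (simp add: RRi)
    finally show ?thesis .
  qed
  thus "hermitian (matrix_inv (msqrt A))" unfolding herm_iff Ri_def R_def by blast
  show "hermitian (msqrt A)" "msqrt A ** msqrt A = A" "psd (msqrt A)" using hR RR pR unfolding R_def by auto
qed

lemma inv_mv:
  assumes "R ** Ri = mat 1" "Ri ** R = (mat 1 :: complex^'n^'n)"
  shows "R *v (Ri *v x) = x" "Ri *v (R *v x) = x"
  using assms by (metis matrix_vector_mul_assoc matrix_vector_mul_lid)+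

definition tp :: "complex^('n+'n) \<Rightarrow> complex^'n" where "tp z = (\<chi> a. z $ Inl a)"
definition bt :: "complex^('n+'n) \<Rightarrow> complex^'n" where "bt z = (\<chi> a. z $ Inr a)"

lemma sum_UNIV_plus: "(\<Sum>k\<in>(UNIV::('a::finite + 'a) set). f k) = (\<Sum>a\<in>UNIV. f (Inl a)) + (\<Sum>b\<in>UNIV. f (Inr b))"
proof -
  have "sum f (UNIV <+> UNIV) = sum (f \<circ> Inl) (UNIV::'a set) + sum (f \<circ> Inr) (UNIV::'a set)"
    by (rule sum.Plus) simp_all
  thus ?thesis by (simp add: comp_def)
qed

lemma qform_block:
  "qform (block2 A X Y B) z = qform A (tp z) + cin (tp z) (X *v bt z) + cin (bt z) (Y *v tp z) + qform B (bt z)"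
  unfolding qform_def cin_def matrix_vector_mult_def block2_def tp_def bt_def
  by (simp add: sum_UNIV_plus distrib_left sum.distrib algebra_simps)

definition mkz :: "complex^'n \<Rightarrow> complex^'n \<Rightarrow> complex^('n+'n)" where
  "mkz u v = (\<chi> k. case k of Inl a \<Rightarrow> u $ a | Inr b \<Rightarrow> v $ b)"

lemma tp_mkz[simp]: "tp (mkz u v) = u" and bt_mkz[simp]: "bt (mkz u v) = v"
  by (simp_all add: tp_def bt_def mkz_def vec_eq_iff)

lemma herm_entry: "hermitian A \<Longrightarrow> cnj (A $ j $ i) = A $ i $ j"
  unfolding hermitian_def adj_def by (metis vec_lambda_beta)

lemma block_herm:
  assumes "hermitian A" "hermitian X" "hermitian B"
  shows "hermitian (block2 A X X B)"
  unfolding hermitian_def adj_def block2_def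
  by (simp add: vec_eq_iff herm_entry[OF assms(1)] herm_entry[OF assms(2)] herm_entry[OF assms(3)] split: sum.split)

definition bq :: "complex^'n^'n \<Rightarrow> complex^'n^'n \<Rightarrow> complex^'n^'n \<Rightarrow> complex^'n \<Rightarrow> complex^'n \<Rightarrow> real" where
  "bq A X B u v = Re (qform A u + cin u (X *v v) + cin v (X *v u) + qform B v)"

lemma psd_block:
  assumes "hermitian A" "hermitian X" "hermitian B"
  shows "psd (block2 A X X B) \<longleftrightarrow> (\<forall>u v. 0 \<le> bq A X B u v)"
proof
  assume p: "psd (block2 A X X B)"
  show "\<forall>u v. 0 \<le> bq A X B u v"
  proof (intro allI)
    fix u v
    have "0 \<le> Re (qform (block2 A X X B) (mkz u v))" using p unfolding psd_def by blast
    thus "0 \<le> bq A X B u v" unfolding qform_block bq_def by simp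
  qed
next
  assume a: "\<forall>u v. 0 \<le> bq A X B u v"
  show "psd (block2 A X X B)" unfolding psd_def
  proof (intro conjI allI)
    show "hermitian (block2 A X X B)" by (rule block_herm[OF assms])
    fix z show "0 \<le> Re (qform (block2 A X X B) z)"
      using a[rule_format, of "tp z" "bt z"] unfolding qform_block bq_def .
  qed
qed



lemma cin_sq_expand: "cin (a + b) (a + b) = cin a a + cin a b + cin b a + cin b b"
  by simp

lemma gmean_block:
  fixes A B :: "complex^'n^'n"
  assumes pA: "posdef A" and pB: "posdef B"
  shows "hermitian (gmean A B)" "psd (block2 A (gmean A B) (gmean A B) B)"
proof -
  define R where "R = msqrt A"
  define Ri where "Ri = matrix_inv R"
  note si = sqrt_inv[OF pA, folded R_def, folded Ri_def]
  have hR: "hermitian R" and hRi: "hermitian Ri" using si by auto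
  have RRi: "R *v (Ri *v x) = x" and RiR: "Ri *v (R *v x) = x" for x using inv_mv[OF si(1) si(2)] by auto
  define D where "D = Ri ** B ** Ri"
  have pD: "psd D" unfolding D_def by (rule psd_cong3[OF hRi posdef_psd[OF pB]])
  define P where "P = msqrt D"
  have pP: "psd P" and PP: "P ** P = D" using msqrt[OF pD] unfolding P_def by auto
  have hP: "hermitian P" using psd_herm[OF pP] .
  have G: "gmean A B = R ** P ** R" unfolding gmean_def Let_def R_def[symmetric] Ri_def[symmetric] D_def[symmetric] P_def[symmetric] ..
  show hG: "hermitian (gmean A B)" unfolding G by (rule herm_mult3[OF hR hP])
  have hA: "hermitian A" and hB: "hermitian B" using pA pB unfolding posdef_def by auto
  have BD: "B *v x = R *v (D *v (R *v x))" for x unfolding D_def by (simp add: RRi RiR)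
  have AR: "A *v x = R *v (R *v x)" for x using si(5) unfolding R_def by (metis mm_mv)
  show "psd (block2 A (gmean A B) (gmean A B) B)"
    unfolding psd_block[OF hA hG hB]
  proof (intro allI)
    fix u v
    define a where "a = R *v u"
    define b where "b = R *v v"
    have t1: "qform A u = cin a a" unfolding qform_cin AR a_def by (rule herm_cin[OF hR])
    have t2: "cin u (gmean A B *v v) = cin a (P *v b)" unfolding G a_def b_def
      by (simp add: herm_cin[OF hR, of u])
    have t3: "cin v (gmean A B *v u) = cin (P *v b) a" unfolding G a_def b_def
      by (simp add: herm_cin[OF hR, of v] herm_cin[OF hP, of "R *v v"])
    have t4: "qform B v = cin (P *v b) (P *v b)" unfolding qform_cin BD b_def
      by (simp add: herm_cin[OF hR, of v] herm_cin[OF hP, of "R *v v"] PP[symmetric])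
    have "bq A (gmean A B) B u v = Re (cin (a + P *v b) (a + P *v b))"
      unfolding bq_def t1 t2 t3 t4 cin_sq_expand ..
    thus "0 \<le> bq A (gmean A B) B u v" using cin_self_ge0[of "a + P *v b"] by (simp only:)
  qed
qed

lemma gmean_max:
  fixes A B X :: "complex^'n^'n"
  assumes pA: "posdef A" and pB: "posdef B" and hX: "hermitian X" and blk: "psd (block2 A X X B)"
  shows "loewner_le X (gmean A B)"
proof -
  define R where "R = msqrt A"
  define Ri where "Ri = matrix_inv R"
  note si = sqrt_inv[OF pA, folded R_def, folded Ri_def]
  have hR: "hermitian R" and hRi: "hermitian Ri" using si by auto
  have RRi: "R *v (Ri *v x) = x" and RiR: "Ri *v (R *v x) = x" for x using inv_mv[OF si(1) si(2)] by auto
  define D where "D = Ri ** B ** Ri"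
  have pD: "psd D" unfolding D_def by (rule psd_cong3[OF hRi posdef_psd[OF pB]])
  define P where "P = msqrt D"
  have pP: "psd P" and PP: "P ** P = D" using msqrt[OF pD] unfolding P_def by auto
  have hP: "hermitian P" using psd_herm[OF pP] .
  have G: "gmean A B = R ** P ** R" unfolding gmean_def Let_def R_def[symmetric] Ri_def[symmetric] D_def[symmetric] P_def[symmetric] ..
  have hA: "hermitian A" and hB: "hermitian B" using pA pB unfolding posdef_def by auto
  define C where "C = Ri ** X ** Ri"
  have hC: "hermitian C" unfolding C_def by (rule herm_mult3[OF hRi hX])
  have AR: "A *v x = R *v (R *v x)" for x using si(5) unfolding R_def by (metis mm_mv)
  have hCC: "hermitian (C ** C)" by (simp add: herm_iff herm_cin[OF hC])
  have "psd (D - C ** C)" unfolding psd_def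
  proof (intro conjI allI)
    show "hermitian (D - C ** C)" by (rule herm_diff[OF psd_herm[OF pD] hCC])
    fix b
    define u where "u = - (Ri *v (C *v b))"
    define v where "v = Ri *v b"
    have "0 \<le> bq A X B u v" using blk unfolding psd_block[OF hA hX hB] by blast
    moreover have Cb: "C *v b = Ri *v (X *v (Ri *v b))" unfolding C_def by simp
    have "qform A u = cin (C *v b) (C *v b)"
      unfolding qform_cin AR herm_cin[OF hR, of u] by (simp add: u_def RRi)
    moreover have "cin u (X *v v) = - cin (C *v b) (C *v b)"
    proof -
      have "cin (Ri *v (C *v b)) (X *v (Ri *v b)) = cin (C *v b) (Ri *v (X *v (Ri *v b)))"
        by (rule herm_cin[OF hRi, symmetric])
      also have "\<dots> = cin (C *v b) (C *v b)" by (simp only: Cb)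
      finally show ?thesis by (simp add: u_def v_def)
    qed
    moreover have "cin v (X *v u) = - cin (C *v b) (C *v b)"
    proof -
      have "cin v (X *v u) = - cin b (Ri *v (X *v (Ri *v (C *v b))))"
        unfolding u_def v_def by (simp add: herm_cin[OF hRi, of b])
      also have "Ri *v (X *v (Ri *v (C *v b))) = C *v (C *v b)" unfolding C_def by simp
      also have "cin b (C *v (C *v b)) = cin (C *v b) (C *v b)" by (rule herm_cin[OF hC])
      finally show ?thesis .
    qed
    moreover have "qform B v = cin b (D *v b)"
      unfolding qform_cin v_def D_def by (simp add: herm_cin[OF hRi, of b])
    moreover have "qform (D - C ** C) b = cin b (D *v b) - cin (C *v b) (C *v b)"
      by (simp add: qform_cin herm_cin[OF hC, of b])
    ultimately show "0 \<le> Re (qform (D - C ** C) b)" unfolding bq_def by simp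
  qed
  hence "psd (P - C)" using sq_le_mono[OF hC pP] PP by simp
  hence p: "psd (R ** (P - C) ** R)" by (rule psd_cong3[OF hR])
  have "R ** (P - C) ** R = gmean A B - X"
    unfolding G matrix_eq C_def by (simp add: RRi RiR)
  thus ?thesis using p unfolding loewner_le_def by simp
qed

lemma block_mono:
  fixes A B M N X :: "complex^'n^'n"
  assumes hA: "hermitian A" and hB: "hermitian B" and hX: "hermitian X"
    and blk: "psd (block2 A X X B)" and AM: "loewner_le A M" and BN: "loewner_le B N"
  shows "psd (block2 M X X N)"
proof -
  have p1: "psd (M - A)" and p2: "psd (N - B)" using AM BN unfolding loewner_le_def by auto
  have hM: "hermitian M" using herm_add[OF psd_herm[OF p1] hA] by simp
  have hN: "hermitian N" using herm_add[OF psd_herm[OF p2] hB] by simp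
  show ?thesis unfolding psd_block[OF hM hX hN]
  proof (intro allI)
    fix u v
    have "0 \<le> bq A X B u v" using blk unfolding psd_block[OF hA hX hB] by blast
    moreover have "0 \<le> Re (qform (M - A) u)" "0 \<le> Re (qform (N - B) v)"
      using p1 p2 unfolding psd_def by auto
    ultimately show "0 \<le> bq M X N u v" unfolding bq_def by (simp add: qform_cin)
  qed
qed

theorem proposition3p3:
  fixes S T :: "(complex^'n^'n) set" and M N :: "complex^'n^'n"
  assumes "S \<noteq> {}" and "T \<noteq> {}"
    and "\<forall>A\<in>S. posdef A" and "\<forall>B\<in>T. posdef B"
    and "loewner_chain S" and "loewner_chain T"
    and "loewner_max S M" and "loewner_max T N"
  shows "loewner_max {X. hermitian X \<and> (\<exists>A\<in>S. \<exists>B\<in>T. psd (block2 A X X B))} (gmean M N)"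
proof -
  have MS: "M \<in> S" and Mmax: "\<forall>A\<in>S. loewner_le A M" using assms(7) unfolding loewner_max_def by auto
  have NT: "N \<in> T" and Nmax: "\<forall>B\<in>T. loewner_le B N" using assms(8) unfolding loewner_max_def by auto
  have pM: "posdef M" and pN: "posdef N" using MS NT assms(3,4) by auto
  note gb = gmean_block[OF pM pN]
  show ?thesis unfolding loewner_max_def
  proof (intro conjI ballI)
    show "gmean M N \<in> {X. hermitian X \<and> (\<exists>A\<in>S. \<exists>B\<in>T. psd (block2 A X X B))}"
      using gb MS NT by blast
  next
    fix X assume "X \<in> {X. hermitian X \<and> (\<exists>A\<in>S. \<exists>B\<in>T. psd (block2 A X X B))}"
    then obtain A B where hX: "hermitian X" and A: "A \<in> S" and B: "B \<in> T" and blk: "psd (block2 A X X B)"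
      by blast
    have pA: "posdef A" and pB: "posdef B" using A B assms(3,4) by auto
    have hA: "hermitian A" and hB: "hermitian B" using pA pB unfolding posdef_def by auto
    have 1: "loewner_le X (gmean A B)" by (rule gmean_max[OF pA pB hX blk])
    note gAB = gmean_block[OF pA pB]
    have "psd (block2 M (gmean A B) (gmean A B) N)"
      by (rule block_mono[OF hA hB gAB(1) gAB(2)]) (use A B Mmax Nmax in auto)
    hence 2: "loewner_le (gmean A B) (gmean M N)" by (rule gmean_max[OF pM pN gAB(1)])
    show "loewner_le X (gmean M N)" by (rule loewner_trans[OF 1 2])
  qed
qed

end
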